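(* Let $c>0$, $f_s>0$, let $M,N,K\ge1$ be integers, $T_{\max}=(N-1)/f_s$, $\bm{r}^{\mathrm{mic}}_1,\dots,\bm{r}^{\mathrm{mic}}_M\in\mathbb{R}^3$ with $E_M=\{\bm{r}^{\mathrm{mic}}_m\}$, and $\bm{x}=(x_{m,n})_{1\le m\le M,0\le n\le N-1}\in\mathbb{R}^{MN}$. Let $\lambda>0$ and let $\kappa:\mathbb{R}\to\mathbb{R}$ be continuous and bounded with $\kappa(0)>0$. Define $$\phi=\inf_{t>0}\sum_{n=0}^{N-1}\frac{\kappa(n/f_s)\,\kappa(n/f_s-t)}{4\pi ct},\qquad\mu_m=\sum_{n=0}^{N-1}x_{m,n}\kappa(n/f_s)\quad(1\le m\le M).$$ Then the problem $$\inf_{(\bm{a},\bm{r})\in\mathbb{R}_+^K\times\mathscr{C}^K}\ \frac12\Big\|\bm{x}-\sum_{k=1}^K a_k\gamma(\bm{r}_k)\Big\|_2^2+\lambda\sum_{k=1}^K a_k$$ has at least one solution whenever one of the following holds: (i) $\phi<0$ and $\mu_m\le\frac{\phi}{2\lambda}\|\bm{x}\|_2^2$ for all $m\in\{1,\dots,M\}$; (ii) $\phi\ge0$ and $\mu_m\le0$ for all $m\in\{1,\dots,M\}$.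
   Context: $\mathbb{R}_+=[0,+\infty)$, $\|\cdot\|_2$ Euclidean norm. For $\bm{r}\in\mathbb{R}^3\setminus E_M$, $\gamma(\bm{r})\in\mathbb{R}^{MN}$ with $\gamma_{m,n}(\bm{r})=\dfrac{\kappa\big(n/f_s-\|\bm{r}-\bm{r}^{\mathrm{mic}}_m\|_2/c\big)}{4\pi\|\bm{r}-\bm{r}^{\mathrm{mic}}_m\|_2}$. $\mathscr{C}=\bigcap_{m=1}^M\overline{B(\bm{r}^{\mathrm{mic}}_m,cT_{\max})}\setminus E_M$ (closed Euclidean balls). *)

theory Defs
  imports "HOL-Analysis.Analysis"
begin

text \<open>Microphones are indexed by m in {1..M}, time samples by n in {0..<N},
  sources by k in {1..K}.  Signals x are functions nat => nat => real
  (x m n = x_{m,n}).\<close>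

definition Tmax :: "real \<Rightarrow> nat \<Rightarrow> real" where
  "Tmax fs N = (real N - 1) / fs"

definition EM :: "(nat \<Rightarrow> real^3) \<Rightarrow> nat \<Rightarrow> (real^3) set" where
  "EM mic M = mic ` {1..M}"

definition gam :: "(real \<Rightarrow> real) \<Rightarrow> real \<Rightarrow> real \<Rightarrow> (nat \<Rightarrow> real^3)
    \<Rightarrow> real^3 \<Rightarrow> nat \<Rightarrow> nat \<Rightarrow> real" where
  "gam \<kappa> c fs mic r m n =
     \<kappa> (real n / fs - norm (r - mic m) / c) / (4 * pi * norm (r - mic m))"

definition Cset :: "real \<Rightarrow> real \<Rightarrow> nat \<Rightarrow> (nat \<Rightarrow> real^3) \<Rightarrow> nat \<Rightarrow> (real^3) set" where
  "Cset c fs N mic M = (\<Inter>m\<in>{1..M}. cball (mic m) (c * Tmax fs N)) - EM mic M"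

definition sqnorm :: "nat \<Rightarrow> nat \<Rightarrow> (nat \<Rightarrow> nat \<Rightarrow> real) \<Rightarrow> real" where
  "sqnorm M N y = (\<Sum>m\<in>{1..M}. \<Sum>n\<in>{0..<N}. (y m n)\<^sup>2)"

definition objective :: "(real \<Rightarrow> real) \<Rightarrow> real \<Rightarrow> real \<Rightarrow> (nat \<Rightarrow> real^3)
    \<Rightarrow> nat \<Rightarrow> nat \<Rightarrow> nat \<Rightarrow> (nat \<Rightarrow> nat \<Rightarrow> real) \<Rightarrow> real
    \<Rightarrow> (nat \<Rightarrow> real) \<Rightarrow> (nat \<Rightarrow> real^3) \<Rightarrow> real" where
  "objective \<kappa> c fs mic M N K x lam a r =
     1/2 * sqnorm M N (\<lambda>m n. x m n - (\<Sum>k\<in>{1..K}. a k * gam \<kappa> c fs mic (r k) m n))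
     + lam * (\<Sum>k\<in>{1..K}. a k)"

definition feasible :: "real \<Rightarrow> real \<Rightarrow> nat \<Rightarrow> (nat \<Rightarrow> real^3) \<Rightarrow> nat \<Rightarrow> nat
    \<Rightarrow> (nat \<Rightarrow> real) \<Rightarrow> (nat \<Rightarrow> real^3) \<Rightarrow> bool" where
  "feasible c fs N mic M K a r \<longleftrightarrow>
     (\<forall>k\<in>{1..K}. a k \<ge> 0 \<and> r k \<in> Cset c fs N mic M)"

definition phi :: "(real \<Rightarrow> real) \<Rightarrow> real \<Rightarrow> real \<Rightarrow> nat \<Rightarrow> real" where
  "phi \<kappa> c fs N = (INF t\<in>{0<..}.
      (\<Sum>n\<in>{0..<N}. \<kappa> (real n / fs) * \<kappa> (real n / fs - t) / (4 * pi * c * t)))"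

definition mu :: "(real \<Rightarrow> real) \<Rightarrow> real \<Rightarrow> nat \<Rightarrow> (nat \<Rightarrow> nat \<Rightarrow> real) \<Rightarrow> nat \<Rightarrow> real" where
  "mu \<kappa> fs N x m = (\<Sum>n\<in>{0..<N}. x m n * \<kappa> (real n / fs))"

end

theory Submission
  imports Defs
begin


definition ff :: "(real \<Rightarrow> real) \<Rightarrow> real \<Rightarrow> real \<Rightarrow> nat \<Rightarrow> real \<Rightarrow> real" where
  "ff \<kappa> c fs N t = (\<Sum>n\<in>{0..<N}. \<kappa> (real n / fs) * \<kappa> (real n / fs - t) / (4 * pi * c * t))"

lemma phi_le:
  fixes \<kappa> :: "real \<Rightarrow> real"
  assumes c: "c > 0" and fs: "fs > 0" and N: "N \<ge> 1"
    and cont: "continuous_on UNIV \<kappa>" and bd: "bounded (range \<kappa>)" and k0: "\<kappa> 0 > 0"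
    and t: "t > 0"
  shows "phi \<kappa> c fs N \<le> ff \<kappa> c fs N t"
proof -
  define g where "g s = (\<Sum>n\<in>{0..<N}. \<kappa> (real n / fs) * \<kappa> (real n / fs - s) / (4 * pi * c))" for s
  have fg: "ff \<kappa> c fs N s = g s / s" if "s > 0" for s
    unfolding ff_def g_def sum_divide_distrib using that c by (intro sum.cong) (auto simp: field_simps)
  have "continuous_on UNIV g"
    unfolding g_def using c
    by (intro continuous_intros continuous_on_compose2[OF cont]) auto
  then have gc: "isCont g 0"
    by (simp add: continuous_on_eq_continuous_at)
  have g0: "g 0 > 0"
  proof -
    have "g 0 = (\<Sum>n\<in>{0..<N}. (\<kappa> (real n / fs))\<^sup>2 / (4 * pi * c))"
      unfolding g_def by (simp add: power2_eq_square)
    also have "\<dots> \<ge> (\<kappa> (real 0 / fs))\<^sup>2 / (4 * pi * c)"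
      by (rule member_le_sum[of 0 "{0..<N}" "\<lambda>n. (\<kappa> (real n / fs))\<^sup>2 / (4 * pi * c)"]) (use N c in auto)
    finally show ?thesis using k0 c by (smt (verit) divide_pos_pos of_nat_0 pi_gt_zero zero_less_power div_0 mult_pos_pos zero_less_numeral)
  qed
  have "eventually (\<lambda>s. 0 < g s) (at 0)"
    using gc g0 by (metis isCont_def order_tendstoD(1))
  then obtain \<tau> where tau: "\<tau> > 0" "\<And>s. s \<noteq> 0 \<Longrightarrow> dist s 0 < \<tau> \<Longrightarrow> 0 < g s"
    unfolding eventually_at by blast
  obtain Kb where Kb: "\<And>y. \<bar>\<kappa> y\<bar> \<le> Kb"
    using bd unfolding bounded_iff by auto
  define L where "L = - (real N * Kb^2 / (4 * pi * c)) / \<tau>"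
  have gb: "\<bar>g s\<bar> \<le> real N * Kb^2 / (4 * pi * c)" for s
  proof -
    have "\<bar>g s\<bar> \<le> (\<Sum>n\<in>{0..<N}. \<bar>\<kappa> (real n / fs) * \<kappa> (real n / fs - s) / (4 * pi * c)\<bar>)"
      unfolding g_def by (rule sum_abs)
    also have "\<dots> \<le> (\<Sum>n\<in>{0..<N}. Kb^2 / (4 * pi * c))"
    proof (rule sum_mono)
      fix n
      have "\<bar>\<kappa> (real n / fs) * \<kappa> (real n / fs - s)\<bar> \<le> Kb * Kb"
        unfolding abs_mult by (rule mult_mono) (use Kb in \<open>auto intro: order_trans[OF abs_ge_zero Kb]\<close>)
      then show "\<bar>\<kappa> (real n / fs) * \<kappa> (real n / fs - s) / (4 * pi * c)\<bar> \<le> Kb^2 / (4 * pi * c)"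
        using c by (simp add: abs_divide power2_eq_square divide_right_mono)
    qed
    finally show ?thesis by simp
  qed
  have lb: "L \<le> ff \<kappa> c fs N s" if "s > 0" for s
  proof (cases "s < \<tau>")
    case True
    then have "g s > 0" using tau that by auto
    then have "ff \<kappa> c fs N s > 0" using fg that by simp
    moreover have "L \<le> 0" unfolding L_def using c tau by (simp add: divide_nonneg_pos)
    ultimately show ?thesis by simp
  next
    case False
    define B where "B = real N * Kb^2 / (4 * pi * c)"
    have B0: "B \<ge> 0" unfolding B_def using c by simp
    have "- B \<le> g s" using gb[of s] unfolding B_def by linarith
    then have "- B / s \<le> g s / s" using that by (intro divide_right_mono) auto
    moreover have "- B / \<tau> \<le> - B / s" using False tau B0 that
      by (simp add: frac_le)
    ultimately show ?thesis using fg that unfolding L_def B_def by simp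
  qed
  have "bdd_below ((\<lambda>s. ff \<kappa> c fs N s) ` {0<..})"
    using lb by (auto intro!: bdd_belowI2)
  then have "(INF s\<in>{0<..}. ff \<kappa> c fs N s) \<le> ff \<kappa> c fs N t"
    using t by (intro cInf_lower) auto
  then show ?thesis unfolding phi_def ff_def .
qed



locale srcloc =
  fixes \<kappa> :: "real \<Rightarrow> real" and c fs lam :: real and M N K :: nat
    and mic :: "nat \<Rightarrow> real^3" and x :: "nat \<Rightarrow> nat \<Rightarrow> real"
  assumes c: "c > 0" and fs: "fs > 0" and M1: "M \<ge> 1" and N1: "N \<ge> 1" and K1: "K \<ge> 1"
    and lam: "lam > 0"
    and cont: "continuous_on UNIV \<kappa>" and bd: "bounded (range \<kappa>)" and k0: "\<kappa> 0 > 0"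
    and ne: "Cset c fs N mic M \<noteq> {}"
begin

definition "E = EM mic M"
definition "D = (\<Inter>m\<in>{1..M}. cball (mic m) (c * Tmax fs N))"
definition "wt r = (\<Prod>p\<in>E. norm (r - p))"
definition "hh r m n = \<kappa> (real n / fs - norm (r - mic m) / c) * (\<Prod>p\<in>E - {mic m}. norm (r - p)) / (4 * pi)"
definition "v n = \<kappa> (real n / fs)"
definition "AA r = (\<Sum>m\<in>{1..M}. \<Sum>n\<in>{0..<N}. hh r m n * v n)"
definition "PP p = (\<Prod>q\<in>E - {p}. norm (p - q))"

lemma finE: "finite E" unfolding E_def EM_def by simp
lemma micE: "m \<in> {1..M} \<Longrightarrow> mic m \<in> E" unfolding E_def EM_def by simp

lemma D_compact: "compact D"
proof -
  have "closed D" unfolding D_def by (intro closed_INT) auto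
  moreover have "bounded D" unfolding D_def
    by (rule bounded_subset[OF bounded_cball[of "mic 1" "c * Tmax fs N"]]) (use M1 in auto)
  ultimately show ?thesis by (simp add: compact_eq_bounded_closed)
qed

lemma Cset_eq: "Cset c fs N mic M = D - E"
  unfolding Cset_def D_def E_def by simp

lemma D_ne: "D \<noteq> {}" using ne Cset_eq by auto

lemma wt_nonneg: "wt r \<ge> 0" unfolding wt_def by (simp add: prod_nonneg)

lemma wt_zero_iff: "wt r = 0 \<longleftrightarrow> r \<in> E"
  unfolding wt_def using finE by (simp add: prod_zero_iff)

lemma wt_pos: "r \<notin> E \<Longrightarrow> wt r > 0"
  using wt_nonneg wt_zero_iff by (metis order_le_less)

lemma wt_gam: assumes "m \<in> {1..M}" "r \<notin> E"
  shows "wt r * gam \<kappa> c fs mic r m n = hh r m n"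
proof -
  have me: "mic m \<in> E" using micE assms by auto
  have nz: "norm (r - mic m) \<noteq> 0" using me assms by auto
  have "wt r = norm (r - mic m) * (\<Prod>p\<in>E - {mic m}. norm (r - p))"
    unfolding wt_def using finE me by (simp add: prod.remove)
  then show ?thesis unfolding gam_def hh_def using nz by (simp add: field_simps)
qed

lemma wt_cont: "continuous_on UNIV wt"
  unfolding wt_def by (intro continuous_intros)

lemma hh_cont: "continuous_on UNIV (\<lambda>r. hh r m n)"
  unfolding hh_def using c
  by (intro continuous_intros continuous_on_compose2[OF cont]) auto

lemma AA_cont: "continuous_on UNIV AA"
  unfolding AA_def by (intro continuous_intros hh_cont)

lemma hh_E: assumes "p \<in> E"
  shows "hh p m n = (if mic m = p then v n * PP p / (4 * pi) else 0)"
proof (cases "mic m = p")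
  case True
  then show ?thesis unfolding hh_def v_def PP_def by simp
next
  case False
  then have "p \<in> E - {mic m}" using assms by auto
  then have "(\<Prod>q\<in>E - {mic m}. norm (p - q)) = 0"
    using finE by (subst prod_zero_iff) auto
  then show ?thesis using False unfolding hh_def by simp
qed

lemma PP_pos: "PP p > 0"
  unfolding PP_def using finE by (intro prod_pos) auto

lemma AA_pos: assumes "p \<in> E" shows "AA p > 0"
proof -
  obtain m0 where m0: "m0 \<in> {1..M}" "mic m0 = p" using assms unfolding E_def EM_def by auto
  have nn: "0 \<le> hh p m n * v n" for m n
  proof -
    have "0 \<le> v n * v n * PP p / (4 * pi)" using PP_pos[of p] by simp
    then show ?thesis using hh_E[OF assms, of m n] by (auto simp: algebra_simps)
  qed
  have "(\<Sum>n\<in>{0..<N}. hh p m0 n * v n) \<le> AA p"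
    unfolding AA_def by (rule member_le_sum[OF m0(1)]) (auto intro!: sum_nonneg nn)
  moreover have "hh p m0 0 * v 0 \<le> (\<Sum>n\<in>{0..<N}. hh p m0 n * v n)"
    by (rule member_le_sum[of 0]) (use N1 nn in auto)
  moreover have "hh p m0 0 * v 0 > 0"
    using hh_E[OF assms, of m0 0] m0 PP_pos[of p] k0 unfolding v_def by simp
  ultimately show ?thesis by linarith
qed

lemma q_bound: obtains q0 lam' where "q0 > 0" "lam' \<ge> 0" "\<And>r. r \<in> D \<Longrightarrow> q0 \<le> AA r + lam' * wt r"
proof -
  define qf where "qf r = max (AA r) (wt r)" for r
  have qc: "continuous_on D qf" unfolding qf_def
    by (intro continuous_intros continuous_on_subset[OF AA_cont] continuous_on_subset[OF wt_cont]) auto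
  obtain r0 where r0: "r0 \<in> D" "\<And>r. r \<in> D \<Longrightarrow> qf r0 \<le> qf r"
    using continuous_attains_inf[OF D_compact D_ne qc] by blast
  have qpos: "qf r > 0" for r
  proof (cases "r \<in> E")
    case True then show ?thesis using AA_pos unfolding qf_def by (simp add: less_max_iff_disj)
  next
    case False then show ?thesis using wt_pos unfolding qf_def by (simp add: less_max_iff_disj)
  qed
  define q0 where "q0 = qf r0"
  have q0: "q0 > 0" unfolding q0_def using qpos by simp
  have "compact (AA ` D)" by (rule compact_continuous_image[OF continuous_on_subset[OF AA_cont] D_compact]) auto
  then have "bounded (AA ` D)" by (rule compact_imp_bounded)
  then obtain CA where CA0: "\<forall>y\<in>AA ` D. norm y \<le> CA" unfolding bounded_iff by blast
  have CA: "\<bar>AA r\<bar> \<le> CA" if "r \<in> D" for r using CA0 that by force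
  have CA0: "CA \<ge> 0" using CA D_ne by (meson abs_ge_zero all_not_in_conv order_trans)
  define l where "l = (CA + q0) / q0"
  have l0: "l \<ge> 0" unfolding l_def using CA0 q0 by simp
  have "q0 \<le> AA r + l * wt r" if r: "r \<in> D" for r
  proof (cases "AA r \<ge> q0")
    case True
    then show ?thesis using l0 wt_nonneg[of r] by (smt (verit) mult_nonneg_nonneg)
  next
    case False
    have "q0 \<le> max (AA r) (wt r)" using r0(2)[OF r] unfolding q0_def qf_def .
    then have w: "wt r \<ge> q0" using False by (auto simp: max_def split: if_splits)
    have "l * wt r \<ge> l * q0" using w l0 by (simp add: mult_left_mono)
    also have "l * q0 = CA + q0" unfolding l_def using q0 by simp
    finally show ?thesis using CA[OF r] by linarith
  qed
  then show ?thesis using that q0 l0 by blast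
qed

definition "G z = 1/2 * sqnorm M N (\<lambda>m n. x m n - (\<Sum>k\<in>{1..K}. fst (z k) * hh (snd (z k)) m n))
   + lam * (\<Sum>k\<in>{1..K}. fst (z k) * wt (snd (z k)))"
definition "F0 = 1/2 * sqnorm M N x"

lemma sqnorm_nonneg: "sqnorm M N y \<ge> 0" unfolding sqnorm_def by (intro sum_nonneg) auto

lemma sqnorm_ge: "m \<in> {1..M} \<Longrightarrow> n < N \<Longrightarrow> (y m n)\<^sup>2 \<le> sqnorm M N y"
  unfolding sqnorm_def
  apply (rule order_trans[OF _ member_le_sum[of m]])
    apply (rule member_le_sum[of n])
  by (auto intro!: sum_nonneg)

lemma F0_nonneg: "F0 \<ge> 0" unfolding F0_def using sqnorm_nonneg by simp

lemma swap_AA: "(\<Sum>m\<in>{1..M}. \<Sum>n\<in>{0..<N}. (\<Sum>k\<in>{1..K}. b k * hh (r k) m n) * v n)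
   = (\<Sum>k\<in>{1..K}. b k * AA (r k))"
proof -
  have "(\<Sum>m\<in>{1..M}. \<Sum>n\<in>{0..<N}. (\<Sum>k\<in>{1..K}. b k * hh (r k) m n) * v n)
     = (\<Sum>m\<in>{1..M}. \<Sum>k\<in>{1..K}. \<Sum>n\<in>{0..<N}. b k * hh (r k) m n * v n)"
    by (simp add: sum_distrib_right sum.swap[of _ "{0..<N}"])
  also have "\<dots> = (\<Sum>k\<in>{1..K}. \<Sum>m\<in>{1..M}. \<Sum>n\<in>{0..<N}. b k * hh (r k) m n * v n)"
    by (rule sum.swap)
  also have "\<dots> = (\<Sum>k\<in>{1..K}. b k * AA (r k))"
    unfolding AA_def by (simp add: sum_distrib_left mult.assoc)
  finally show ?thesis .
qed

end

context srcloc begin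
lemma beta_bound: obtains Bb where "Bb \<ge> 0"
  "\<And>z. (\<forall>k\<in>{1..K}. 0 \<le> fst (z k) \<and> snd (z k) \<in> D) \<Longrightarrow> G z \<le> F0 \<Longrightarrow> (\<Sum>k\<in>{1..K}. fst (z k)) \<le> Bb"
proof -
  obtain q0 l where q0: "q0 > 0" "l \<ge> 0" "\<And>r. r \<in> D \<Longrightarrow> q0 \<le> AA r + l * wt r"
    using q_bound by blast
  define CL where "CL = (\<Sum>m\<in>{1..M}. \<Sum>n\<in>{0..<N}. (\<bar>x m n\<bar> + sqrt (2 * F0)) * \<bar>v n\<bar>)"
  have CL0: "CL \<ge> 0" unfolding CL_def by (intro sum_nonneg mult_nonneg_nonneg add_nonneg_nonneg) (use F0_nonneg in auto)
  define Bb where "Bb = (CL + l * F0 / lam) / q0"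
  have Bb0: "Bb \<ge> 0" unfolding Bb_def using CL0 q0 F0_nonneg lam by simp
  have "(\<Sum>k\<in>{1..K}. fst (z k)) \<le> Bb"
    if z: "\<forall>k\<in>{1..K}. 0 \<le> fst (z k) \<and> snd (z k) \<in> D" and G: "G z \<le> F0" for z
  proof -
    define y where "y m n = (\<Sum>k\<in>{1..K}. fst (z k) * hh (snd (z k)) m n)" for m n
    define W where "W = (\<Sum>k\<in>{1..K}. fst (z k) * wt (snd (z k)))"
    have W0: "W \<ge> 0" unfolding W_def using z wt_nonneg by (intro sum_nonneg) auto
    have Gz: "G z = 1/2 * sqnorm M N (\<lambda>m n. x m n - y m n) + lam * W"
      unfolding G_def y_def W_def by simp
    have s1: "sqnorm M N (\<lambda>m n. x m n - y m n) \<le> 2 * F0"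
    proof -
      have "lam * W \<ge> 0" using lam W0 by simp
      then show ?thesis using G Gz by linarith
    qed
    have s2: "W \<le> F0 / lam"
    proof -
      have "lam * W \<le> F0" using G Gz sqnorm_nonneg[of "\<lambda>m n. x m n - y m n"] by linarith
      then show ?thesis using lam by (simp add: pos_le_divide_eq mult.commute)
    qed
    have yb: "y m n * v n \<le> (\<bar>x m n\<bar> + sqrt (2 * F0)) * \<bar>v n\<bar>" if "m \<in> {1..M}" "n < N" for m n
    proof -
      have "(x m n - y m n)\<^sup>2 \<le> 2 * F0"
        using sqnorm_ge[OF that, of "\<lambda>m n. x m n - y m n"] s1 by simp
      then have "sqrt ((x m n - y m n)\<^sup>2) \<le> sqrt (2 * F0)"
        by (rule real_sqrt_le_mono)
      then have "\<bar>x m n - y m n\<bar> \<le> sqrt (2 * F0)" by simp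
      then have "\<bar>y m n\<bar> \<le> \<bar>x m n\<bar> + sqrt (2 * F0)" by linarith
      then have "\<bar>y m n\<bar> * \<bar>v n\<bar> \<le> (\<bar>x m n\<bar> + sqrt (2 * F0)) * \<bar>v n\<bar>"
        by (simp add: mult_right_mono)
      moreover have "y m n * v n \<le> \<bar>y m n\<bar> * \<bar>v n\<bar>" by (simp add: abs_mult[symmetric])
      ultimately show ?thesis by linarith
    qed
    have "(\<Sum>k\<in>{1..K}. fst (z k) * AA (snd (z k))) = (\<Sum>m\<in>{1..M}. \<Sum>n\<in>{0..<N}. y m n * v n)"
      unfolding y_def by (rule swap_AA[symmetric])
    also have "\<dots> \<le> CL" unfolding CL_def
      by (intro sum_mono) (use yb in auto)
    finally have A1: "(\<Sum>k\<in>{1..K}. fst (z k) * AA (snd (z k))) \<le> CL" .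
    have "q0 * (\<Sum>k\<in>{1..K}. fst (z k)) = (\<Sum>k\<in>{1..K}. fst (z k) * q0)"
      by (simp add: sum_distrib_left mult.commute)
    also have "\<dots> \<le> (\<Sum>k\<in>{1..K}. fst (z k) * (AA (snd (z k)) + l * wt (snd (z k))))"
      by (intro sum_mono mult_left_mono) (use z q0 in auto)
    also have "\<dots> = (\<Sum>k\<in>{1..K}. fst (z k) * AA (snd (z k))) + l * W"
      unfolding W_def by (simp add: distrib_left sum.distrib sum_distrib_left mult.left_commute)
    also have "\<dots> \<le> CL + l * (F0 / lam)"
      using A1 mult_left_mono[OF s2 q0(2)] by linarith
    finally have "q0 * (\<Sum>k\<in>{1..K}. fst (z k)) \<le> CL + l * F0 / lam" by simp
    then show ?thesis unfolding Bb_def using q0 by (simp add: pos_le_divide_eq mult.commute)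
  qed
  then show ?thesis using that Bb0 by blast
qed

end


lemma cont_coord [continuous_intros]: "continuous_on S (\<lambda>z. z k :: 'b::topological_space)"
  by (rule continuous_on_subset[OF continuous_on_product_coordinates]) auto

lemma compact_PiE_UNIV:
  assumes "\<And>i. compact (S i :: 'b::topological_space set)"
  shows "compact (PiE UNIV S)"
proof -
  have "compactin (product_topology (\<lambda>_. euclidean) UNIV) (PiE UNIV S)"
    using assms by (subst compactin_PiE) auto
  then show ?thesis by (simp add: euclidean_product_topology)
qed

context srcloc begin

lemma G_cont: "continuous_on UNIV G"
  unfolding G_def sqnorm_def
  by (intro continuous_intros continuous_on_compose2[OF hh_cont] continuous_on_compose2[OF wt_cont]) auto

definition "ip (y1 :: nat \<Rightarrow> nat \<Rightarrow> real) y2 = (\<Sum>m\<in>{1..M}. \<Sum>n\<in>{0..<N}. y1 m n * y2 m n)"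

lemma sqnorm_diff: "sqnorm M N (\<lambda>m n. a m n - b m n) = sqnorm M N a - 2 * ip a b + sqnorm M N b"
  unfolding sqnorm_def ip_def
  by (simp add: power2_diff sum.distrib sum_subtractf sum_distrib_left mult.assoc)

lemma ip_lin: fixes y :: "nat \<Rightarrow> nat \<Rightarrow> real" and b :: "nat \<Rightarrow> real" shows "ip y (\<lambda>m n. \<Sum>k\<in>{1..K}. b k * H k m n) = (\<Sum>k\<in>{1..K}. b k * ip y (H k))"
proof -
  have "ip y (\<lambda>m n. \<Sum>k\<in>{1..K}. b k * H k m n)
     = (\<Sum>m\<in>{1..M}. \<Sum>n\<in>{0..<N}. \<Sum>k\<in>{1..K}. b k * (y m n * H k m n))"
    unfolding ip_def by (simp add: sum_distrib_left mult.left_commute)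
  also have "\<dots> = (\<Sum>m\<in>{1..M}. \<Sum>k\<in>{1..K}. \<Sum>n\<in>{0..<N}. b k * (y m n * H k m n))"
    by (rule sum.cong[OF refl], rule sum.swap)
  also have "\<dots> = (\<Sum>k\<in>{1..K}. \<Sum>m\<in>{1..M}. \<Sum>n\<in>{0..<N}. b k * (y m n * H k m n))"
    by (rule sum.swap)
  also have "\<dots> = (\<Sum>k\<in>{1..K}. b k * ip y (H k))"
    unfolding ip_def by (simp add: sum_distrib_left)
  finally show ?thesis .
qed

lemma sqnorm_cong: "(\<And>m n. m \<in> {1..M} \<Longrightarrow> n < N \<Longrightarrow> y m n = y' m n) \<Longrightarrow> sqnorm M N y = sqnorm M N y'"
  unfolding sqnorm_def by (intro sum.cong) auto

lemma obj_G:
  assumes "feasible c fs N mic M K a r"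
  shows "objective \<kappa> c fs mic M N K x lam a r
    = G (\<lambda>k. if k \<in> {1..K} then (a k / wt (r k), r k) else (0, p))"
proof -
  have rk: "r k \<notin> E" "wt (r k) > 0" if "k \<in> {1..K}" for k
    using assms that wt_pos unfolding feasible_def Cset_eq by auto
  have 1: "a k * gam \<kappa> c fs mic (r k) m n = a k / wt (r k) * hh (r k) m n"
    if "k \<in> {1..K}" "m \<in> {1..M}" for k m n
    using wt_gam[OF that(2) rk(1)[OF that(1)], of n] rk(2)[OF that(1)]
    by (simp add: field_simps)
  have 2: "a k = a k / wt (r k) * wt (r k)" if "k \<in> {1..K}" for k
    using rk(2)[OF that] by simp
  define zz where "zz = (\<lambda>k. if k \<in> {1..K} then (a k / wt (r k), r k) else (0, p))"
  have 3: "(\<Sum>k\<in>{1..K}. a k * gam \<kappa> c fs mic (r k) m n) = (\<Sum>k\<in>{1..K}. fst (zz k) * hh (snd (zz k)) m n)"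
    if "m \<in> {1..M}" for m n
    by (rule sum.cong) (use 1 that in \<open>auto simp: zz_def\<close>)
  have 4: "(\<Sum>k\<in>{1..K}. a k) = (\<Sum>k\<in>{1..K}. fst (zz k) * wt (snd (zz k)))"
    by (rule sum.cong) (use 2 in \<open>auto simp: zz_def\<close>)
  have 5: "sqnorm M N (\<lambda>m n. x m n - (\<Sum>k\<in>{1..K}. a k * gam \<kappa> c fs mic (r k) m n))
     = sqnorm M N (\<lambda>m n. x m n - (\<Sum>k\<in>{1..K}. fst (zz k) * hh (snd (zz k)) m n))"
    by (rule sqnorm_cong) (use 3 in auto)
  show ?thesis unfolding objective_def G_def zz_def[symmetric] 5 4 ..
qed

end


context srcloc begin

theorem main:
  assumes hyp: "(phi \<kappa> c fs N < 0 \<and>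
          (\<forall>m\<in>{1..M}. mu \<kappa> fs N x m \<le> phi \<kappa> c fs N / (2 * lam) * sqnorm M N x))
       \<or> (phi \<kappa> c fs N \<ge> 0 \<and> (\<forall>m\<in>{1..M}. mu \<kappa> fs N x m \<le> 0))"
  shows "\<exists>a r. feasible c fs N mic M K a r \<and>
           (\<forall>a' r'. feasible c fs N mic M K a' r' \<longrightarrow>
              objective \<kappa> c fs mic M N K x lam a r \<le> objective \<kappa> c fs mic M N K x lam a' r')"
proof -
  obtain Bb where Bb0: "Bb \<ge> 0" and Bb: "\<And>z. (\<forall>k\<in>{1..K}. 0 \<le> fst (z k) \<and> snd (z k) \<in> D) \<Longrightarrow> G z \<le> F0 \<Longrightarrow> (\<Sum>k\<in>{1..K}. fst (z k)) \<le> Bb"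
    using beta_bound by blast
  obtain p0 where p0: "p0 \<in> D" "p0 \<notin> E" using ne Cset_eq by auto
  define Sk where "Sk k = (if k \<in> {1..K} then {0..Bb} \<times> D else {(0::real, p0)})" for k
  define Z where "Z = PiE UNIV Sk"
  have memZ: "z \<in> Z \<longleftrightarrow> (\<forall>k. z k \<in> Sk k)" for z unfolding Z_def by (simp add: PiE_iff)
  have cZ: "compact Z" unfolding Z_def
    by (rule compact_PiE_UNIV) (auto simp: Sk_def intro!: compact_Times D_compact)
  define z0 where "z0 = (\<lambda>k::nat. (0::real, p0))"
  have z0Z: "z0 \<in> Z" unfolding memZ z0_def Sk_def using p0 Bb0 by auto
  have Gz0: "G z0 = F0" unfolding G_def z0_def F0_def by simp
  obtain zs where zsZ: "zs \<in> Z" and zsmin: "\<And>z. z \<in> Z \<Longrightarrow> G zs \<le> G z"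
    using continuous_attains_inf[OF cZ _ continuous_on_subset[OF G_cont]] z0Z by blast
  define \<beta> where "\<beta> k = fst (zs k)" for k
  define \<rho> where "\<rho> k = snd (zs k)" for k
  have zsk: "0 \<le> \<beta> k \<and> \<beta> k \<le> Bb \<and> \<rho> k \<in> D" if "k \<in> {1..K}" for k
  proof -
    have "zs k \<in> Sk k" using zsZ unfolding memZ by blast
    then have "zs k \<in> {0..Bb} \<times> D" using that unfolding Sk_def by simp
    then show ?thesis unfolding \<beta>_def \<rho>_def by (auto simp: mem_Times_iff)
  qed
  define ga where "ga k = (if \<rho> k \<in> E then 0 else \<beta> k)" for k
  define bb where "bb k = (if \<rho> k \<in> E then \<beta> k else 0)" for k
  define as where "as k = (if \<rho> k \<in> E then 0 else \<beta> k * wt (\<rho> k))" for k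
  define rs where "rs k = (if \<rho> k \<in> E then p0 else \<rho> k)" for k
  define R0 where "R0 m n = x m n - (\<Sum>k\<in>{1..K}. ga k * hh (\<rho> k) m n)" for m n
  define Sb where "Sb m n = (\<Sum>k\<in>{1..K}. bb k * hh (\<rho> k) m n)" for m n
  define Sa where "Sa = (\<Sum>k\<in>{1..K}. as k)"
  have as0: "as k \<ge> 0" if "k \<in> {1..K}" for k
    using zsk[OF that] wt_nonneg unfolding as_def by simp
  have feas: "feasible c fs N mic M K as rs"
    unfolding feasible_def Cset_eq using as0 zsk p0 by (auto simp: rs_def)
  have objeq: "objective \<kappa> c fs mic M N K x lam as rs = 1/2 * sqnorm M N R0 + lam * Sa"
  proof -
    have "sqnorm M N (\<lambda>m n. x m n - (\<Sum>k\<in>{1..K}. as k * gam \<kappa> c fs mic (rs k) m n)) = sqnorm M N R0"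
    proof (rule sqnorm_cong)
      fix m n assume m: "m \<in> {1..M}" and "n < N"
      have "as k * gam \<kappa> c fs mic (rs k) m n = ga k * hh (\<rho> k) m n" for k
        using wt_gam[OF m, of "\<rho> k" n] unfolding as_def ga_def rs_def by auto
      then show "x m n - (\<Sum>k\<in>{1..K}. as k * gam \<kappa> c fs mic (rs k) m n) = R0 m n"
        unfolding R0_def by simp
    qed
    then show ?thesis unfolding objective_def Sa_def by simp
  qed
  have Geq: "G zs = 1/2 * sqnorm M N (\<lambda>m n. R0 m n - Sb m n) + lam * Sa"
  proof -
    have 1: "\<beta> k * hh (\<rho> k) m n = ga k * hh (\<rho> k) m n + bb k * hh (\<rho> k) m n" for k m n
      unfolding ga_def bb_def by auto
    have 2: "\<beta> k * wt (\<rho> k) = as k" for k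
      unfolding as_def using wt_zero_iff by auto
    have "(\<lambda>m n. x m n - (\<Sum>k\<in>{1..K}. fst (zs k) * hh (snd (zs k)) m n)) = (\<lambda>m n. R0 m n - Sb m n)"
      unfolding R0_def Sb_def \<beta>_def[symmetric] \<rho>_def[symmetric] 1 by (simp add: sum.distrib diff_diff_eq)
    moreover have "(\<Sum>k\<in>{1..K}. fst (zs k) * wt (snd (zs k))) = Sa"
      unfolding Sa_def \<beta>_def[symmetric] \<rho>_def[symmetric] 2 ..
    ultimately show ?thesis unfolding G_def by simp
  qed
  have Sa0: "Sa \<ge> 0" unfolding Sa_def using as0 by (intro sum_nonneg) auto
  have GF0: "G zs \<le> F0" using zsmin[OF z0Z] Gz0 by simp
  have Sale: "Sa \<le> F0 / lam"
  proof -
    have "lam * Sa \<le> F0" using GF0 Geq sqnorm_nonneg[of "\<lambda>m n. R0 m n - Sb m n"] by linarith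
    then show ?thesis using lam by (simp add: pos_le_divide_eq mult.commute)
  qed
  have key: "(\<Sum>n\<in>{0..<N}. R0 m n * v n) \<le> 0" if m: "m \<in> {1..M}" for m
  proof -
    have sw: "(\<Sum>n\<in>{0..<N}. (\<Sum>k\<in>{1..K}. ga k * hh (\<rho> k) m n) * v n)
        = (\<Sum>k\<in>{1..K}. ga k * (\<Sum>n\<in>{0..<N}. hh (\<rho> k) m n * v n))"
    proof -
      have "(\<Sum>n\<in>{0..<N}. (\<Sum>k\<in>{1..K}. ga k * hh (\<rho> k) m n) * v n)
          = (\<Sum>n\<in>{0..<N}. \<Sum>k\<in>{1..K}. ga k * (hh (\<rho> k) m n * v n))"
        by (simp add: sum_distrib_right mult.assoc)
      also have "\<dots> = (\<Sum>k\<in>{1..K}. \<Sum>n\<in>{0..<N}. ga k * (hh (\<rho> k) m n * v n))"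
        by (rule sum.swap)
      also have "\<dots> = (\<Sum>k\<in>{1..K}. ga k * (\<Sum>n\<in>{0..<N}. hh (\<rho> k) m n * v n))"
        by (simp add: sum_distrib_left)
      finally show ?thesis .
    qed
    have e1: "(\<Sum>n\<in>{0..<N}. R0 m n * v n) = mu \<kappa> fs N x m - (\<Sum>k\<in>{1..K}. ga k * (\<Sum>n\<in>{0..<N}. hh (\<rho> k) m n * v n))"
      unfolding R0_def mu_def sw[symmetric] by (simp add: left_diff_distrib sum_subtractf v_def)
    have e2: "as k * phi \<kappa> c fs N \<le> ga k * (\<Sum>n\<in>{0..<N}. hh (\<rho> k) m n * v n)" if k: "k \<in> {1..K}" for k
    proof (cases "\<rho> k \<in> E")
      case True then show ?thesis unfolding as_def ga_def by simp
    next
      case False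
      have me: "mic m \<in> E" using micE m by simp
      have dpos: "norm (\<rho> k - mic m) > 0" using False me by auto
      have "(\<Sum>n\<in>{0..<N}. hh (\<rho> k) m n * v n) = wt (\<rho> k) * (\<Sum>n\<in>{0..<N}. gam \<kappa> c fs mic (\<rho> k) m n * v n)"
        unfolding wt_gam[OF m False, symmetric] by (simp add: sum_distrib_left mult.assoc)
      also have "(\<Sum>n\<in>{0..<N}. gam \<kappa> c fs mic (\<rho> k) m n * v n) = ff \<kappa> c fs N (norm (\<rho> k - mic m) / c)"
        unfolding ff_def gam_def v_def using c by (intro sum.cong refl) (simp add: field_simps)
      finally have eq: "(\<Sum>n\<in>{0..<N}. hh (\<rho> k) m n * v n) = wt (\<rho> k) * ff \<kappa> c fs N (norm (\<rho> k - mic m) / c)" .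
      have "phi \<kappa> c fs N \<le> ff \<kappa> c fs N (norm (\<rho> k - mic m) / c)"
        by (rule phi_le[OF c fs N1 cont bd k0]) (use dpos c in simp)
      moreover have "\<beta> k * wt (\<rho> k) \<ge> 0" using zsk[OF k] wt_nonneg by simp
      ultimately have "\<beta> k * wt (\<rho> k) * phi \<kappa> c fs N \<le> \<beta> k * wt (\<rho> k) * ff \<kappa> c fs N (norm (\<rho> k - mic m) / c)"
        by (rule mult_left_mono)
      then show ?thesis using False unfolding as_def ga_def eq by (simp add: mult.assoc)
    qed
    have "Sa * phi \<kappa> c fs N \<le> (\<Sum>k\<in>{1..K}. ga k * (\<Sum>n\<in>{0..<N}. hh (\<rho> k) m n * v n))"
      unfolding Sa_def sum_distrib_right by (rule sum_mono) (use e2 in auto)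
    moreover have "mu \<kappa> fs N x m \<le> Sa * phi \<kappa> c fs N"
      using hyp
    proof
      assume h: "phi \<kappa> c fs N < 0 \<and> (\<forall>m\<in>{1..M}. mu \<kappa> fs N x m \<le> phi \<kappa> c fs N / (2 * lam) * sqnorm M N x)"
      have "mu \<kappa> fs N x m \<le> phi \<kappa> c fs N * (F0 / lam)"
        using h m unfolding F0_def by (simp add: field_simps)
      also have "\<dots> \<le> phi \<kappa> c fs N * Sa"
        using h Sale by (intro mult_left_mono_neg) auto
      finally show ?thesis by (simp add: mult.commute)
    next
      assume h: "phi \<kappa> c fs N \<ge> 0 \<and> (\<forall>m\<in>{1..M}. mu \<kappa> fs N x m \<le> 0)"
      then show ?thesis using m Sa0 by (smt (verit) mult_nonneg_nonneg)
    qed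
    ultimately show ?thesis using e1 by linarith
  qed
  have ipHE: "ip R0 (hh p) \<le> 0" if p: "p \<in> E" for p
    unfolding ip_def
  proof (rule sum_nonpos)
    fix m assume m: "m \<in> {1..M}"
    show "(\<Sum>n\<in>{0..<N}. R0 m n * hh p m n) \<le> 0"
    proof (cases "mic m = p")
      case True
      have "(\<Sum>n\<in>{0..<N}. R0 m n * hh p m n) = PP p / (4 * pi) * (\<Sum>n\<in>{0..<N}. R0 m n * v n)"
        unfolding hh_E[OF p] using True by (simp add: sum_distrib_left mult_ac)
      also have "\<dots> \<le> 0" using key[OF m] PP_pos[of p] by (intro mult_nonneg_nonpos) auto
      finally show ?thesis .
    next
      case False then show ?thesis unfolding hh_E[OF p] by simp
    qed
  qed
  have ipS: "ip R0 Sb \<le> 0"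
  proof -
    have "ip R0 Sb = (\<Sum>k\<in>{1..K}. bb k * ip R0 (hh (\<rho> k)))"
      unfolding Sb_def by (rule ip_lin)
    also have "\<dots> \<le> 0"
    proof (rule sum_nonpos)
      fix k assume k: "k \<in> {1..K}"
      show "bb k * ip R0 (hh (\<rho> k)) \<le> 0"
        using zsk[OF k] ipHE[of "\<rho> k"] unfolding bb_def by (auto intro: mult_nonneg_nonpos)
    qed
    finally show ?thesis .
  qed
  have objle: "objective \<kappa> c fs mic M N K x lam as rs \<le> G zs"
    unfolding objeq Geq sqnorm_diff using ipS sqnorm_nonneg[of Sb] by simp
  have "objective \<kappa> c fs mic M N K x lam as rs \<le> objective \<kappa> c fs mic M N K x lam a' r'"
    if fe: "feasible c fs N mic M K a' r'" for a' r'
  proof -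
    define z' where "z' = (\<lambda>k. if k \<in> {1..K} then (a' k / wt (r' k), r' k) else (0, p0))"
    have oz: "objective \<kappa> c fs mic M N K x lam a' r' = G z'"
      unfolding z'_def by (rule obj_G[OF fe])
    show ?thesis
    proof (cases "G z' \<le> F0")
      case False
      then show ?thesis using objle GF0 oz by linarith
    next
      case True
      have hz: "\<forall>k\<in>{1..K}. 0 \<le> fst (z' k) \<and> snd (z' k) \<in> D"
        using fe wt_nonneg unfolding feasible_def Cset_eq z'_def by auto
      have sb: "(\<Sum>k\<in>{1..K}. fst (z' k)) \<le> Bb" by (rule Bb[OF hz True])
      have "fst (z' k) \<le> Bb" if k: "k \<in> {1..K}" for k
      proof -
        have "fst (z' k) \<le> (\<Sum>k\<in>{1..K}. fst (z' k))"
          by (rule member_le_sum[OF k]) (use hz in auto)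
        then show ?thesis using sb by linarith
      qed
      then have "z' \<in> Z" unfolding memZ Sk_def using hz p0
        by (auto simp: mem_Times_iff z'_def split: if_splits)
      then show ?thesis using zsmin objle oz by fastforce
    qed
  qed
  then show ?thesis using feas by blast
qed

end

theorem theorem2:
  fixes c fs lam :: real and M N K :: nat
    and mic :: "nat \<Rightarrow> real^3" and x :: "nat \<Rightarrow> nat \<Rightarrow> real"
    and \<kappa> :: "real \<Rightarrow> real"
  assumes "c > 0" and "fs > 0" and "M \<ge> 1" and "N \<ge> 1" and "K \<ge> 1"
    and "lam > 0"
    and "continuous_on UNIV \<kappa>" and "bounded (range \<kappa>)" and "\<kappa> 0 > 0"
    and "Cset c fs N mic M \<noteq> {}"
    and "(phi \<kappa> c fs N < 0 \<and>
          (\<forall>m\<in>{1..M}. mu \<kappa> fs N x m \<le> phi \<kappa> c fs N / (2 * lam) * sqnorm M N x))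
       \<or> (phi \<kappa> c fs N \<ge> 0 \<and> (\<forall>m\<in>{1..M}. mu \<kappa> fs N x m \<le> 0))"
  shows "\<exists>a r. feasible c fs N mic M K a r \<and>
           (\<forall>a' r'. feasible c fs N mic M K a' r' \<longrightarrow>
              objective \<kappa> c fs mic M N K x lam a r \<le> objective \<kappa> c fs mic M N K x lam a' r')"
proof -
  interpret srcloc \<kappa> c fs lam M N K mic x
    by unfold_locales (use assms in auto)
  show ?thesis by (rule main[OF assms(11)])
qed

end
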